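(* Let $R$ be a commutative Noetherian semiring and $I$ a $k$-ideal of $R$. If $I=\bigcap_{i=1}^n Q_i$ is a reduced primary decomposition of $I$ with $\sqrt{Q_i}=P_i$ for $i=1,\dots,n$, then $$\{P_1,\dots,P_n\}=\{P \text{ prime ideal of } R \mid \exists\, x\in R \text{ such that } P=\sqrt{(I:x)}\}.$$ In particular, the set $\{P_1,\dots,P_n\}$ is independent of the particular reduced primary decomposition chosen for $I$.
   Context: A semiring is a set $R$ with addition and multiplication such that $(R,+)$ is a commutative monoid with identity $0$, $(R,\cdot)$ is a monoid with identity $1$, multiplication distributes over addition on both sides, $0\cdot r=0=r\cdot 0$ for all $r$, and $1\neq 0$. $R$ is commutative if $(R,\cdot)$ is commutative. An ideal of $R$ is a nonempty subset closed under addition and under multiplication by arbitrary elements of $R$. $R$ is Noetherian if it satisfies the ascending chain condition on ideals. An ideal $I$ is a $k$-ideal if $x+y\in I$ and $x\in I$ imply $y\in I$. A proper ideal $P$ is prime if $ab\in P$ implies $a\in P$ or $b\in P$. The radical of an ideal $I$ is $\sqrt{I}=\{a\in R\mid a^n\in I \text{ for some } n\ge 1\}$. A proper ideal $Q$ is primary if $xy\in Q$ implies $x\in Q$ or $y\in\sqrt{Q}$. For $x\in R$, $(I:x)=\{r\in R\mid rx\in I\}$. A primary decomposition $I=\bigcap_{i=1}^n Q_i$ (each $Q_i$ primary, $P_i=\sqrt{Q_i}$) is reduced if the $P_i$ are pairwise distinct and $I$ is not the intersection of any proper subfamily of the $Q_i$. *)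

theory Defs
  imports Main
begin

definition sr_ideal :: "'a::comm_semiring_1 set \<Rightarrow> bool" where
  "sr_ideal I \<longleftrightarrow> I \<noteq> {} \<and> (\<forall>x\<in>I. \<forall>y\<in>I. x + y \<in> I)
     \<and> (\<forall>r x. x \<in> I \<longrightarrow> r * x \<in> I \<and> x * r \<in> I)"

definition sr_noetherian :: "'a::comm_semiring_1 itself \<Rightarrow> bool" where
  "sr_noetherian TYPE('a) \<longleftrightarrow>
     (\<forall>C :: nat \<Rightarrow> 'a set. (\<forall>n. sr_ideal (C n)) \<and> (\<forall>n. C n \<subseteq> C (Suc n))
        \<longrightarrow> (\<exists>m. \<forall>n\<ge>m. C n = C m))"

definition k_ideal :: "'a::comm_semiring_1 set \<Rightarrow> bool" where
  "k_ideal I \<longleftrightarrow> sr_ideal I \<and> (\<forall>x y. x + y \<in> I \<and> x \<in> I \<longrightarrow> y \<in> I)"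

definition sr_prime :: "'a::comm_semiring_1 set \<Rightarrow> bool" where
  "sr_prime P \<longleftrightarrow> sr_ideal P \<and> P \<noteq> UNIV \<and> (\<forall>a b. a * b \<in> P \<longrightarrow> a \<in> P \<or> b \<in> P)"

definition sr_radical :: "'a::comm_semiring_1 set \<Rightarrow> 'a set" where
  "sr_radical I = {a. \<exists>n\<ge>1. a ^ n \<in> I}"

definition sr_primary :: "'a::comm_semiring_1 set \<Rightarrow> bool" where
  "sr_primary Q \<longleftrightarrow> sr_ideal Q \<and> Q \<noteq> UNIV \<and>
     (\<forall>x y. x * y \<in> Q \<longrightarrow> x \<in> Q \<or> y \<in> sr_radical Q)"

definition sr_colon :: "'a::comm_semiring_1 set \<Rightarrow> 'a \<Rightarrow> 'a set" where
  "sr_colon I x = {r. r * x \<in> I}"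

text \<open>Reduced primary decomposition I = Q_0 \<inter> ... \<inter> Q_(n-1), indexed by i < n.\<close>
definition reduced_primary_decomp :: "'a::comm_semiring_1 set \<Rightarrow> nat \<Rightarrow> (nat \<Rightarrow> 'a set) \<Rightarrow> bool" where
  "reduced_primary_decomp I n Q \<longleftrightarrow>
     (\<forall>i<n. sr_primary (Q i)) \<and>
     I = (\<Inter>i\<in>{..<n}. Q i) \<and>
     (\<forall>i<n. \<forall>j<n. i \<noteq> j \<longrightarrow> sr_radical (Q i) \<noteq> sr_radical (Q j)) \<and>
     (\<forall>J. J \<subset> {..<n} \<longrightarrow> I \<noteq> (\<Inter>i\<in>J. Q i))"

end

theory Submission
  imports Defs
begin

lemma radI: "n \<ge> 1 \<Longrightarrow> a ^ n \<in> Q \<Longrightarrow> a \<in> sr_radical Q"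
  unfolding sr_radical_def by blast
lemma radE: "a \<in> sr_radical Q \<Longrightarrow> (\<And>n. n \<ge> 1 \<Longrightarrow> a ^ n \<in> Q \<Longrightarrow> P) \<Longrightarrow> P"
  unfolding sr_radical_def by blast
lemma primaryD: "sr_primary Q \<Longrightarrow> x * y \<in> Q \<Longrightarrow> x \<in> Q \<or> y \<in> sr_radical Q"
  unfolding sr_primary_def by blast
lemma primeD: "sr_prime P \<Longrightarrow> x * y \<in> P \<Longrightarrow> x \<in> P \<or> y \<in> P"
  unfolding sr_prime_def by blast

lemma ideal_mult: "sr_ideal Q \<Longrightarrow> y \<in> Q \<Longrightarrow> y * r \<in> Q"
  unfolding sr_ideal_def by blast

lemma ideal_mult2: "sr_ideal Q \<Longrightarrow> y \<in> Q \<Longrightarrow> r * y \<in> Q"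
  unfolding sr_ideal_def by blast

lemma ideal_add: "sr_ideal Q \<Longrightarrow> y \<in> Q \<Longrightarrow> z \<in> Q \<Longrightarrow> y + z \<in> Q"
  unfolding sr_ideal_def by blast

lemma ideal_zero: assumes "sr_ideal Q" shows "0 \<in> Q"
proof -
  obtain y where "y \<in> Q" using assms unfolding sr_ideal_def by blast
  then have "0 * y \<in> Q" using assms unfolding sr_ideal_def by blast
  then show ?thesis by simp
qed

lemma ideal_sum: assumes "sr_ideal Q" "finite A" "\<forall>k\<in>A. f k \<in> Q" shows "sum f A \<in> Q"
  using assms(2,3)
proof (induction A rule: finite_induct)
  case empty then show ?case using assms(1) by (simp add: ideal_zero)
next
  case (insert x F) then show ?case using assms(1) by (simp add: ideal_add)
qed

lemma pow_in_rad: "sr_ideal Q \<Longrightarrow> m \<ge> 1 \<Longrightarrow> a ^ m \<in> Q \<Longrightarrow> N \<ge> m \<Longrightarrow> a ^ N \<in> Q"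
proof -
  assume "sr_ideal Q" "m \<ge> 1" "a ^ m \<in> Q" "N \<ge> m"
  then have "a ^ m * a ^ (N - m) \<in> Q" by (simp add: ideal_mult)
  then show ?thesis using \<open>N \<ge> m\<close> by (simp add: power_add[symmetric])
qed

lemma rad_ideal:
  assumes Q: "sr_ideal Q" shows "sr_ideal (sr_radical Q)"
proof -
  have z: "0 \<in> sr_radical Q" using ideal_zero[OF Q] by (intro radI[of 1]) auto
  have add: "a + b \<in> sr_radical Q" if a: "a \<in> sr_radical Q" and b: "b \<in> sr_radical Q" for a b
  proof -
    obtain m where m: "m \<ge> 1" "a ^ m \<in> Q" using a by (rule radE)
    obtain l where l: "l \<ge> 1" "b ^ l \<in> Q" using b by (rule radE)
    have "(a + b) ^ (m + l) = (\<Sum>k\<le>m + l. of_nat (m + l choose k) * a ^ k * b ^ (m + l - k))"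
      by (rule binomial_ring)
    also have "\<dots> \<in> Q"
    proof (rule ideal_sum[OF Q], simp, intro ballI)
      fix k assume "k \<in> {..m + l}"
      show "of_nat (m + l choose k) * a ^ k * b ^ (m + l - k) \<in> Q"
      proof (cases "k \<ge> m")
        case True
        then have "a ^ k \<in> Q" using pow_in_rad[OF Q m] by blast
        then have "of_nat (m + l choose k) * a ^ k \<in> Q" by (rule ideal_mult2[OF Q])
        then show ?thesis by (rule ideal_mult[OF Q])
      next
        case False
        then have "b ^ (m + l - k) \<in> Q" using pow_in_rad[OF Q l] by simp
        then show ?thesis by (rule ideal_mult2[OF Q])
      qed
    qed
    finally have "(a + b) ^ (m + l) \<in> Q" .
    moreover have "m + l \<ge> 1" using m by simp
    ultimately show ?thesis by (rule radI[rotated])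
  qed
  have mul: "r * a \<in> sr_radical Q \<and> a * r \<in> sr_radical Q" if a: "a \<in> sr_radical Q" for a r
  proof -
    obtain m where m: "m \<ge> 1" "a ^ m \<in> Q" using a by (rule radE)
    have "(r * a) ^ m \<in> Q" using m Q by (simp add: power_mult_distrib ideal_mult2)
    then have "r * a \<in> sr_radical Q" using m(1) by (rule radI[rotated])
    then show ?thesis by (simp add: mult.commute)
  qed
  show ?thesis unfolding sr_ideal_def using z add mul by auto
qed

lemma rad_rad: assumes "b ^ m \<in> sr_radical Q" "m \<ge> 1" shows "b \<in> sr_radical Q"
proof -
  obtain k where k: "k \<ge> 1" "(b ^ m) ^ k \<in> Q" using assms(1) by (rule radE)
  have "b ^ (m * k) \<in> Q" using k(2) by (simp add: power_mult)
  moreover have "m * k \<ge> 1" using k(1) assms(2) by simp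
  ultimately show ?thesis by (rule radI[rotated])
qed

lemma rad_prime:
  assumes Q: "sr_primary Q" shows "sr_prime (sr_radical Q)"
proof -
  have QI: "sr_ideal Q" and QU: "Q \<noteq> UNIV" using Q unfolding sr_primary_def by auto
  have "1 \<notin> sr_radical Q"
  proof
    assume "1 \<in> sr_radical Q"
    then have "1 \<in> Q" by (rule radE) simp
    then have "\<And>r. r \<in> Q" using ideal_mult2[OF QI, of 1] by simp
    then show False using QU by auto
  qed
  then have ne: "sr_radical Q \<noteq> UNIV" by auto
  have pr: "a \<in> sr_radical Q \<or> b \<in> sr_radical Q" if ab: "a * b \<in> sr_radical Q" for a b
  proof -
    obtain m where m: "m \<ge> 1" "(a * b) ^ m \<in> Q" using ab by (rule radE)
    then have "a ^ m * b ^ m \<in> Q" by (simp add: power_mult_distrib)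
    then have "a ^ m \<in> Q \<or> b ^ m \<in> sr_radical Q" by (rule primaryD[OF Q])
    then show ?thesis
    proof
      assume "a ^ m \<in> Q" then show ?thesis using m(1) radI by blast
    next
      assume "b ^ m \<in> sr_radical Q"
      then show ?thesis using rad_rad m(1) by blast
    qed
  qed
  show ?thesis unfolding sr_prime_def
    using rad_ideal[OF QI] ne pr by simp
qed

lemma prime_prod:
  assumes P: "sr_prime P" and fin: "finite S"
  shows "prod f S \<in> P \<Longrightarrow> \<exists>j\<in>S. f j \<in> P"
  using fin
proof (induction S rule: finite_induct)
  case empty
  then have "1 \<in> P" by simp
  then have "\<And>r. r \<in> P" using P ideal_mult2[of P 1] unfolding sr_prime_def by simp
  then have "P = UNIV" by blast
  then show ?case using P unfolding sr_prime_def by blast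
next
  case (insert x F)
  then have "f x * prod f F \<in> P" by simp
  then have "f x \<in> P \<or> prod f F \<in> P" by (rule primeD[OF P])
  then show ?case using insert by blast
qed

theorem theorem2p13:
  fixes I :: "'a::comm_semiring_1 set" and Q :: "nat \<Rightarrow> 'a set" and n :: nat
  assumes "sr_noetherian TYPE('a)"
    and "k_ideal I"
    and "reduced_primary_decomp I n Q"
  shows "(\<lambda>i. sr_radical (Q i)) ` {..<n} =
         {P. sr_prime P \<and> (\<exists>x. P = sr_radical (sr_colon I x))}"
proof -
  have prim: "\<And>i. i < n \<Longrightarrow> sr_primary (Q i)" and Idef: "I = (\<Inter>i\<in>{..<n}. Q i)"
    and red: "\<And>J. J \<subset> {..<n} \<Longrightarrow> I \<noteq> (\<Inter>i\<in>J. Q i)"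
    using assms(3) unfolding reduced_primary_decomp_def by (blast, blast, blast)
  have QI: "\<And>i. i < n \<Longrightarrow> sr_ideal (Q i)" using prim unfolding sr_primary_def by blast
  have F2: "sr_radical (sr_colon I x) = (\<Inter>i\<in>{i. i < n \<and> x \<notin> Q i}. sr_radical (Q i))" for x
  proof
    show "sr_radical (sr_colon I x) \<subseteq> (\<Inter>i\<in>{i. i < n \<and> x \<notin> Q i}. sr_radical (Q i))"
    proof (intro subsetI INT_I)
      fix a i assume a: "a \<in> sr_radical (sr_colon I x)" and i: "i \<in> {i. i < n \<and> x \<notin> Q i}"
      obtain m where m: "m \<ge> 1" "a ^ m \<in> sr_colon I x" using a by (rule radE)
      then have "a ^ m * x \<in> I" unfolding sr_colon_def by simp
      then have "x * a ^ m \<in> Q i" using i Idef by (auto simp: mult.commute)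
      then have "x \<in> Q i \<or> a ^ m \<in> sr_radical (Q i)" using prim i by (intro primaryD) auto
      then have "a ^ m \<in> sr_radical (Q i)" using i by simp
      then show "a \<in> sr_radical (Q i)" using m(1) by (rule rad_rad)
    qed
  next
    show "(\<Inter>i\<in>{i. i < n \<and> x \<notin> Q i}. sr_radical (Q i)) \<subseteq> sr_radical (sr_colon I x)"
    proof
      fix a assume a: "a \<in> (\<Inter>i\<in>{i. i < n \<and> x \<notin> Q i}. sr_radical (Q i))"
      have "\<exists>m. i < n \<and> x \<notin> Q i \<longrightarrow> m \<ge> 1 \<and> a ^ m \<in> Q i" for i
      proof (cases "i < n \<and> x \<notin> Q i")
        case True
        then have "a \<in> sr_radical (Q i)" using a by simp
        then obtain m where "m \<ge> 1" "a ^ m \<in> Q i" by (rule radE)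
        then show ?thesis by blast
      qed blast
      then obtain f where f: "\<And>i. i < n \<and> x \<notin> Q i \<Longrightarrow> f i \<ge> 1 \<and> a ^ (f i) \<in> Q i" by metis
      define N where "N = 1 + (\<Sum>i<n. f i)"
      have "a ^ N * x \<in> Q i" if i: "i < n" for i
      proof (cases "x \<in> Q i")
        case True then show ?thesis using QI[OF i] ideal_mult2 by blast
      next
        case False
        have "f i \<le> (\<Sum>i<n. f i)" using i by (intro member_le_sum) auto
        then have "f i \<le> N" unfolding N_def by simp
        moreover have "f i \<ge> 1" "a ^ (f i) \<in> Q i" using f[of i] i False by auto
        ultimately have "a ^ N \<in> Q i" using pow_in_rad[OF QI[OF i]] by blast
        then show ?thesis using QI[OF i] ideal_mult by blast
      qed
      then have "a ^ N \<in> sr_colon I x" unfolding sr_colon_def Idef by auto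
      moreover have "N \<ge> 1" unfolding N_def by simp
      ultimately show "a \<in> sr_radical (sr_colon I x)" by (intro radI[of N])
    qed
  qed
  show ?thesis
  proof
    show "(\<lambda>i. sr_radical (Q i)) ` {..<n} \<subseteq> {P. sr_prime P \<and> (\<exists>x. P = sr_radical (sr_colon I x))}"
    proof
      fix P assume "P \<in> (\<lambda>i. sr_radical (Q i)) ` {..<n}"
      then obtain j where j: "j < n" "P = sr_radical (Q j)" by auto
      have "{..<n} - {j} \<subset> {..<n}" using j by auto
      then have ne: "I \<noteq> (\<Inter>i\<in>{..<n} - {j}. Q i)" by (rule red)
      have "I \<subseteq> (\<Inter>i\<in>{..<n} - {j}. Q i)" using Idef by auto
      then obtain x where x: "x \<in> (\<Inter>i\<in>{..<n} - {j}. Q i)" "x \<notin> I" using ne by blast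
      then have "x \<notin> Q j" using Idef by auto
      then have "{i. i < n \<and> x \<notin> Q i} = {j}" using x j by auto
      then have "P = sr_radical (sr_colon I x)" using F2[of x] j by simp
      then show "P \<in> {P. sr_prime P \<and> (\<exists>x. P = sr_radical (sr_colon I x))}"
        using rad_prime[OF prim[OF j(1)]] j by auto
    qed
  next
    show "{P. sr_prime P \<and> (\<exists>x. P = sr_radical (sr_colon I x))} \<subseteq> (\<lambda>i. sr_radical (Q i)) ` {..<n}"
    proof
      fix P assume "P \<in> {P. sr_prime P \<and> (\<exists>x. P = sr_radical (sr_colon I x))}"
      then obtain x where P: "sr_prime P" "P = sr_radical (sr_colon I x)" by auto
      define S where "S = {i. i < n \<and> x \<notin> Q i}"
      have PS: "P = (\<Inter>i\<in>S. sr_radical (Q i))" using P F2 S_def by simp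
      show "P \<in> (\<lambda>i. sr_radical (Q i)) ` {..<n}"
      proof (rule ccontr)
        assume nin: "P \<notin> (\<lambda>i. sr_radical (Q i)) ` {..<n}"
        have "\<forall>j. \<exists>b. j \<in> S \<longrightarrow> b \<in> sr_radical (Q j) \<and> b \<notin> P"
        proof
          fix j show "\<exists>b. j \<in> S \<longrightarrow> b \<in> sr_radical (Q j) \<and> b \<notin> P"
          proof (cases "j \<in> S")
            case True
            then have "P \<subseteq> sr_radical (Q j)" "P \<noteq> sr_radical (Q j)" using PS nin S_def by auto
            then show ?thesis by blast
          qed auto
        qed
        then obtain g where g: "\<And>j. j \<in> S \<Longrightarrow> g j \<in> sr_radical (Q j) \<and> g j \<notin> P" by metis
        have fin: "finite S" unfolding S_def by auto
        have "prod g S \<in> sr_radical (Q j)" if j: "j \<in> S" for j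
        proof -
          have "prod g S = g j * prod g (S - {j})" using fin j by (simp add: prod.remove)
          moreover have "sr_ideal (sr_radical (Q j))" using rad_ideal QI j S_def by auto
          ultimately show ?thesis using g[OF j] ideal_mult by metis
        qed
        then have "prod g S \<in> P" using PS by auto
        then obtain j where "j \<in> S" "g j \<in> P" using prime_prod[OF P(1) fin] by blast
        then show False using g by blast
      qed
    qed
  qed
qed

end
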